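(* Let $\Delta\subset M_\mathbb{R}$ be a reflexive polytope with $\dim\Delta=\dim M_\mathbb{R}$, let $\{\Delta_1,\dots,\Delta_s\}$ be a nef-partition of $\Delta$ and $\{\nabla_1,\dots,\nabla_s\}$ its dual nef-partition. Let $p_i\in\nabla_i$ ($1\le i\le s$) with $\sum_{i=1}^sp_i=0$ and $\dim_\mathbb{R}\operatorname{Span}_\mathbb{R}\{p_1,\dots,p_s\}=s-r$. Then there exist pairwise disjoint nonempty sets $I_1,\dots,I_r$ with $\coprod_{k=1}^rI_k=\{1,\dots,s\}$ such that $\sum_{i\in I_k}p_i=0$ for each $k$. *)

theory Defs
  imports "HOL-Analysis.Analysis"
begin

text \<open>We model M_R = real^'n with lattice M = integer points, and identify
  N_R with real^'n via the standard inner product (the pairing of M and N).\<close>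

definition lattice_point :: "real ^ 'n \<Rightarrow> bool" where
  "lattice_point x \<longleftrightarrow> (\<forall>i. x $ i \<in> \<int>)"

definition lattice_polytope :: "(real ^ 'n) set \<Rightarrow> bool" where
  "lattice_polytope P \<longleftrightarrow>
     (\<exists>V. finite V \<and> V \<noteq> {} \<and> (\<forall>v\<in>V. lattice_point v) \<and> P = convex hull V)"

definition polar_dual :: "(real ^ 'n) set \<Rightarrow> (real ^ 'n) set" where
  "polar_dual P = {y. \<forall>x\<in>P. x \<bullet> y \<ge> -1}"

definition reflexive_polytope :: "(real ^ 'n) set \<Rightarrow> bool" where
  "reflexive_polytope P \<longleftrightarrow>
     lattice_polytope P \<and> 0 \<in> interior P \<and> lattice_polytope (polar_dual P)"

definition minkowski_sum_family :: "nat \<Rightarrow> (nat \<Rightarrow> (real ^ 'n) set) \<Rightarrow> (real ^ 'n) set" where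
  "minkowski_sum_family s D = {(\<Sum>i\<in>{1..s}. x i) | x. \<forall>i\<in>{1..s}. x i \<in> D i}"

definition nef_partition :: "(real ^ 'n) set \<Rightarrow> nat \<Rightarrow> (nat \<Rightarrow> (real ^ 'n) set) \<Rightarrow> bool" where
  "nef_partition \<Delta> s D \<longleftrightarrow> 1 \<le> s \<and>
     (\<forall>i\<in>{1..s}. lattice_polytope (D i) \<and> 0 \<in> D i) \<and>
     \<Delta> = minkowski_sum_family s D"

definition dual_nef_partition :: "nat \<Rightarrow> (nat \<Rightarrow> (real ^ 'n) set) \<Rightarrow> (nat \<Rightarrow> (real ^ 'n) set) \<Rightarrow> bool" where
  "dual_nef_partition s D N \<longleftrightarrow>
     (\<forall>i\<in>{1..s}. N i = {y. \<forall>j\<in>{1..s}. \<forall>x\<in>D j. x \<bullet> y \<ge> - (if i = j then 1 else 0)})"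

end

theory Submission
  imports Defs
begin

locale nefctx =
  fixes s :: nat and D :: "nat \<Rightarrow> (real^'n) set" and p :: "nat \<Rightarrow> real^'n" and \<Delta> :: "(real^'n) set"
  assumes offdiag: "\<And>i j y. i\<in>{1..s} \<Longrightarrow> j\<in>{1..s} \<Longrightarrow> i\<noteq>j \<Longrightarrow> y \<in> D j \<Longrightarrow> y \<bullet> p i \<ge> 0"
  and sum0: "(\<Sum>i\<in>{1..s}. p i) = 0"
  and int0: "0 \<in> interior \<Delta>"
  and mink: "\<Delta> = minkowski_sum_family s D"
begin

definition cl :: "nat set \<Rightarrow> bool" where
  "cl W \<longleftrightarrow> W \<subseteq> {1..s} \<and> (\<forall>j\<in>W. \<forall>i\<in>{1..s}-W. \<forall>y\<in>D j. y \<bullet> p i = 0)"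

definition atom :: "nat \<Rightarrow> nat set" where "atom i = \<Inter>{W. cl W \<and> i \<in> W}"

lemma zero_imp_cl:
  assumes W: "W \<subseteq> {1..s}" and z: "(\<Sum>i\<in>W. p i) = 0"
  shows "cl W"
  unfolding cl_def
proof (intro conjI W ballI)
  fix j i y assume j: "j \<in> W" and i: "i \<in> {1..s} - W" and y: "y \<in> D j"
  have "(\<Sum>i\<in>{1..s}. p i) = (\<Sum>k\<in>{1..s}-W. p k) + (\<Sum>k\<in>W. p k)"
    using sum.subset_diff[OF W] by simp
  hence c: "(\<Sum>k\<in>{1..s}-W. p k) = 0" using sum0 z by simp
  have "(\<Sum>k\<in>{1..s}-W. y \<bullet> p k) = 0" using c by (simp add: inner_sum_right[symmetric])
  moreover have "\<And>k. k \<in> {1..s}-W \<Longrightarrow> 0 \<le> y \<bullet> p k"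
    using j y W by (intro offdiag) auto
  ultimately have "\<forall>k\<in>{1..s}-W. y \<bullet> p k = 0"
    using sum_nonneg_eq_0_iff[of "{1..s}-W" "\<lambda>k. y \<bullet> p k"] by auto
  thus "y \<bullet> p i = 0" using i by auto
qed

lemma cl_imp_zero:
  assumes "cl W" shows "(\<Sum>i\<in>W. p i) = 0"
proof -
  have W: "W \<subseteq> {1..s}" and clo: "\<And>j i y. j\<in>W \<Longrightarrow> i\<in>{1..s}-W \<Longrightarrow> y\<in>D j \<Longrightarrow> y \<bullet> p i = 0"
    using assms unfolding cl_def by auto
  define q where "q = (\<Sum>i\<in>W. p i)"
  have ge: "x \<bullet> q \<ge> 0" if x: "x \<in> \<Delta>" for x
  proof -
    obtain xs where xe: "x = (\<Sum>j\<in>{1..s}. xs j)" and xs: "\<forall>j\<in>{1..s}. xs j \<in> D j"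
      using x mink unfolding minkowski_sum_family_def by auto
    have "x \<bullet> q = (\<Sum>j\<in>{1..s}. xs j \<bullet> q)" by (simp add: xe inner_sum_left)
    also have "\<dots> \<ge> 0"
    proof (rule sum_nonneg)
      fix j assume j: "j \<in> {1..s}"
      have qe: "xs j \<bullet> q = (\<Sum>i\<in>W. xs j \<bullet> p i)" by (simp add: q_def inner_sum_right)
      show "0 \<le> xs j \<bullet> q"
      proof (cases "j \<in> W")
        case True
        have "(\<Sum>i\<in>{1..s}. xs j \<bullet> p i) = (\<Sum>k\<in>{1..s}-W. xs j \<bullet> p k) + (\<Sum>k\<in>W. xs j \<bullet> p k)"
          using sum.subset_diff[OF W] by simp
        moreover have "(\<Sum>i\<in>{1..s}. xs j \<bullet> p i) = 0" using sum0 by (simp add: inner_sum_right[symmetric])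
        moreover have "(\<Sum>k\<in>{1..s}-W. xs j \<bullet> p k) = 0"
          using clo[OF True] xs j by simp
        ultimately show ?thesis using qe by simp
      next
        case False
        show ?thesis unfolding qe
          by (rule sum_nonneg) (use W False xs j in \<open>intro offdiag, auto\<close>)
      qed
    qed
    finally show ?thesis .
  qed
  obtain e where e: "e > 0" "ball 0 e \<subseteq> \<Delta>" using int0 mem_interior by blast
  show ?thesis
  proof (rule ccontr)
    assume "(\<Sum>i\<in>W. p i) \<noteq> 0"
    hence qn: "q \<noteq> 0" by (simp add: q_def)
    hence nq: "norm q > 0" by simp
    define x where "x = - (e / (2 * norm q)) *\<^sub>R q"
    have "norm x = e / 2" using nq e by (simp add: x_def)
    hence "x \<in> \<Delta>" using e by auto
    hence "x \<bullet> q \<ge> 0" by (rule ge)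
    moreover have "x \<bullet> q = - (e / (2 * norm q)) * (norm q)^2"
      by (simp add: x_def power2_norm_eq_inner)
    moreover have "- (e / (2 * norm q)) * (norm q)^2 < 0" using nq e by (simp add: power2_eq_square)
    ultimately show False by linarith
  qed
qed

lemma cl_univ: "cl {1..s}" unfolding cl_def by auto

lemma cl_Inter: assumes "F \<noteq> {}" "\<forall>W\<in>F. cl W" shows "cl (\<Inter>F)"
  using assms unfolding cl_def by blast

lemma cl_compl: assumes "cl W" shows "cl ({1..s} - W)"
proof -
  have W: "W \<subseteq> {1..s}" using assms cl_def by auto
  have "(\<Sum>i\<in>{1..s}. p i) = (\<Sum>k\<in>{1..s}-W. p k) + (\<Sum>k\<in>W. p k)"
    using sum.subset_diff[OF W] by simp
  hence "(\<Sum>k\<in>{1..s}-W. p k) = 0" using sum0 cl_imp_zero[OF assms] by simp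
  thus ?thesis by (intro zero_imp_cl) auto
qed

lemma cl_int: "cl A \<Longrightarrow> cl B \<Longrightarrow> cl (A \<inter> B)"
  unfolding cl_def by blast

lemma atom_cl: "i \<in> {1..s} \<Longrightarrow> cl (atom i)"
  unfolding atom_def by (rule cl_Inter) (use cl_univ in auto)

lemma atom_mem: "i \<in> {1..s} \<Longrightarrow> i \<in> atom i"
  unfolding atom_def by auto

lemma atom_sub: "cl W \<Longrightarrow> i \<in> W \<Longrightarrow> atom i \<subseteq> W"
  unfolding atom_def by auto

lemma atom_sub1: "i \<in> {1..s} \<Longrightarrow> atom i \<subseteq> {1..s}"
  using atom_cl cl_def by blast

lemma atom_min:
  assumes i: "i \<in> {1..s}" and W: "cl W" "W \<subseteq> atom i" "W \<noteq> {}"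
  shows "W = atom i"
proof (cases "i \<in> W")
  case True thus ?thesis using atom_sub[OF W(1)] W(2) by auto
next
  case False
  have "cl (atom i \<inter> ({1..s} - W))" using cl_int[OF atom_cl[OF i] cl_compl[OF W(1)]] .
  moreover have "i \<in> atom i \<inter> ({1..s} - W)" using False i atom_mem by auto
  ultimately have "atom i \<subseteq> atom i \<inter> ({1..s} - W)" by (rule atom_sub)
  thus ?thesis using W by auto
qed

lemma atom_eq: assumes i: "i \<in> {1..s}" and j: "j \<in> atom i" shows "atom j = atom i"
proof -
  have js: "j \<in> {1..s}" using atom_sub1[OF i] j by auto
  show ?thesis
    by (rule atom_min[OF i atom_cl[OF js]]) (use atom_sub[OF atom_cl[OF i] j] atom_mem[OF js] in auto)
qed

lemma const:
  assumes c: "(\<Sum>k\<in>{1..s}. c k *\<^sub>R p k) = 0" and i: "i \<in> {1..s}" and j: "j \<in> atom i"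
  shows "c j = c i"
proof -
  define A where "A = atom i"
  have As: "A \<subseteq> {1..s}" using atom_sub1[OF i] A_def by simp
  have fA: "finite A" using As finite_subset by blast
  have Ane: "A \<noteq> {}" using atom_mem[OF i] A_def by auto
  have clA: "cl A" using atom_cl[OF i] A_def by simp
  define m where "m = Min (c ` A)"
  define L where "L = {k\<in>A. c k = m}"
  have mle: "\<And>k. k \<in> A \<Longrightarrow> m \<le> c k" using fA m_def by auto
  have "m \<in> c ` A" using fA Ane m_def by simp
  hence Lne: "L \<noteq> {}" using L_def by auto
  have clL: "cl L" unfolding cl_def
  proof (intro conjI ballI)
    show "L \<subseteq> {1..s}" using As L_def by auto
    fix j k y assume jL: "j \<in> L" and k: "k \<in> {1..s} - L" and y: "y \<in> D j"
    have jA: "j \<in> A" and cj: "c j = m" using jL L_def by auto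
    have e1: "(\<Sum>k\<in>{1..s}. c k * (y \<bullet> p k)) = 0"
      using arg_cong[OF c, of "\<lambda>v. y \<bullet> v"] by (simp add: inner_sum_right)
    have e2: "(\<Sum>k\<in>{1..s}. y \<bullet> p k) = 0"
      using arg_cong[OF sum0, of "\<lambda>v. y \<bullet> v"] by (simp add: inner_sum_right)
    have e3: "(\<Sum>k\<in>{1..s}. (c k - m) * (y \<bullet> p k)) = 0"
      using e1 e2 by (simp add: algebra_simps sum_subtractf sum_distrib_left[symmetric])
    have nn: "0 \<le> (c k - m) * (y \<bullet> p k)" if kk: "k \<in> {1..s}" for k
    proof (cases "k = j")
      case True thus ?thesis using cj by simp
    next
      case False
      show ?thesis
      proof (cases "k \<in> A")
        case True
        have "0 \<le> y \<bullet> p k" using kk As jA y False by (intro offdiag) auto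
        thus ?thesis using mle[OF True] by simp
      next
        case kA: False
        have "y \<bullet> p k = 0" using clA jA kk kA y unfolding cl_def by auto
        thus ?thesis by simp
      qed
    qed
    have "\<forall>k\<in>{1..s}. (c k - m) * (y \<bullet> p k) = 0"
      using sum_nonneg_eq_0_iff[of "{1..s}" "\<lambda>k. (c k - m) * (y \<bullet> p k)"] nn e3 by auto
    hence z: "(c k - m) * (y \<bullet> p k) = 0" using k by auto
    show "y \<bullet> p k = 0"
    proof (cases "k \<in> A")
      case True
      hence "c k \<noteq> m" using k L_def by auto
      thus ?thesis using z by simp
    next
      case False thus ?thesis using clA jA k y unfolding cl_def by auto
    qed
  qed
  have "L = A" unfolding A_def by (rule atom_min[OF i clL]) (use L_def A_def Lne in auto)
  hence "\<forall>k\<in>A. c k = m" using L_def by auto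
  thus ?thesis using j atom_mem[OF i] A_def by auto
qed

definition R where "R = {i\<in>{1..s}. Min (atom i) = i}"
definition S where "S = {1..s} - R"

lemma minatom: assumes i: "i \<in> {1..s}" shows "Min (atom i) \<in> atom i" "Min (atom i) \<in> R"
proof -
  have f: "finite (atom i)" using atom_sub1[OF i] finite_subset by blast
  show m: "Min (atom i) \<in> atom i" using f atom_mem[OF i] by (intro Min_in) auto
  have e: "atom (Min (atom i)) = atom i" by (rule atom_eq[OF i m])
  show "Min (atom i) \<in> R" unfolding R_def using e m atom_sub1[OF i] by auto
qed

lemma indep_key:
  assumes c: "(\<Sum>i\<in>S. c i *\<^sub>R p i) = 0" and k: "k \<in> S"
  shows "c k = 0"
proof -
  define c' where "c' i = (if i \<in> S then c i else 0)" for i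
  have "(\<Sum>i\<in>{1..s}. c' i *\<^sub>R p i) = (\<Sum>i\<in>S. c' i *\<^sub>R p i)"
    by (rule sum.mono_neutral_right) (auto simp: S_def c'_def)
  also have "\<dots> = 0" using c by (simp add: c'_def)
  finally have c0: "(\<Sum>i\<in>{1..s}. c' i *\<^sub>R p i) = 0" .
  have ks: "k \<in> {1..s}" using k S_def by auto
  have "c' (Min (atom k)) = c' k" by (rule const[OF c0 ks minatom(1)[OF ks]])
  moreover have "c' (Min (atom k)) = 0" using minatom(2)[OF ks] by (simp add: c'_def S_def)
  ultimately show ?thesis using k by (simp add: c'_def)
qed

lemma injS: "inj_on p S"
proof (rule inj_onI, rule ccontr)
  fix i j assume i: "i \<in> S" and j: "j \<in> S" and e: "p i = p j" and ne: "i \<noteq> j"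
  define c where "c k = (if k = i then 1 else if k = j then -1 else (0::real))" for k
  have "(\<Sum>k\<in>S. c k *\<^sub>R p k) = (\<Sum>k\<in>{i,j}. c k *\<^sub>R p k)"
    by (rule sum.mono_neutral_right) (use i j in \<open>auto simp: c_def S_def\<close>)
  also have "\<dots> = 0" using ne e by (simp add: c_def)
  finally have "c i = 0" using indep_key i by blast
  thus False by (simp add: c_def)
qed

lemma indepS: "independent (p ` S)"
proof (rule independent_if_scalars_zero)
  show "finite (p ` S)" by (simp add: S_def)
  fix f x assume h: "(\<Sum>x\<in>p ` S. f x *\<^sub>R x) = 0" and x: "x \<in> p ` S"
  have "(\<Sum>i\<in>S. f (p i) *\<^sub>R p i) = 0" using h by (simp add: sum.reindex[OF injS])
  thus "f x = 0" using indep_key[of "\<lambda>i. f (p i)"] x by auto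
qed

lemma spanS: "span (p ` {1..s}) = span (p ` S)"
proof
  show "span (p ` S) \<subseteq> span (p ` {1..s})" by (rule span_mono) (auto simp: S_def)
  have "p ` {1..s} \<subseteq> span (p ` S)"
  proof
    fix v assume "v \<in> p ` {1..s}"
    then obtain i where i: "i \<in> {1..s}" and v: "v = p i" by auto
    show "v \<in> span (p ` S)"
    proof (cases "i \<in> S")
      case True thus ?thesis using v by (simp add: span_base)
    next
      case False
      hence iR: "i \<in> R" using i S_def by auto
      hence mi: "Min (atom i) = i" using R_def by auto
      have fa: "finite (atom i)" using atom_sub1[OF i] finite_subset by blast
      have z0: "sum p (atom i) = 0" using cl_imp_zero[OF atom_cl[OF i]] by simp
      have z1: "sum p (atom i) = p i + sum p (atom i - {i})" by (rule sum.remove[OF fa atom_mem[OF i]])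
      have "p i + (\<Sum>k\<in>atom i - {i}. p k) = 0"
        using z0 z1 by metis
      hence pe: "p i = - (\<Sum>k\<in>atom i - {i}. p k)" by (simp add: eq_neg_iff_add_eq_0)
      have sub: "atom i - {i} \<subseteq> S"
      proof
        fix k assume k: "k \<in> atom i - {i}"
        have ks: "k \<in> {1..s}" using k atom_sub1[OF i] by auto
        have "atom k = atom i" using atom_eq[OF i] k by auto
        hence "Min (atom k) \<noteq> k" using mi k by auto
        thus "k \<in> S" using ks by (simp add: S_def R_def)
      qed
      have "(\<Sum>k\<in>atom i - {i}. p k) \<in> span (p ` S)"
        by (rule span_sum) (use sub in \<open>auto intro: span_base\<close>)
      thus ?thesis using v pe span_neg by metis
    qed
  qed
  thus "span (p ` {1..s}) \<subseteq> span (p ` S)"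
    by (metis span_minimal subspace_span)
qed

lemma dim_eq: "dim (span (p ` {1..s})) = s - card R"
proof -
  have "dim (span (p ` {1..s})) = card (p ` S)"
    using spanS dim_span_eq_card_independent[OF indepS] by simp
  also have "\<dots> = card S" by (rule card_image[OF injS])
  also have "\<dots> = s - card R" unfolding S_def by (subst card_Diff_subset) (auto simp: R_def)
  finally show ?thesis .
qed

lemma partition_ex:
  assumes "int (dim (span (p ` {1..s}))) = int s - int r"
  shows "\<exists>I :: nat \<Rightarrow> nat set.
           (\<forall>k\<in>{1..r}. I k \<noteq> {}) \<and>
           (\<forall>k\<in>{1..r}. \<forall>l\<in>{1..r}. k \<noteq> l \<longrightarrow> I k \<inter> I l = {}) \<and>
           (\<Union>k\<in>{1..r}. I k) = {1..s} \<and>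
           (\<forall>k\<in>{1..r}. (\<Sum>i\<in>I k. p i) = 0)"
proof -
  have Rsub: "R \<subseteq> {1..s}" unfolding R_def by blast
  hence "card R \<le> card {1..s}" by (intro card_mono) auto
  moreover have "card {1..s} = s" by simp
  ultimately have "card R \<le> s" by linarith
  hence "int (s - card R) = int s - int (card R)" by (rule of_nat_diff)
  moreover have "int (s - card R) = int s - int r" using assms dim_eq by metis
  ultimately have cR: "card R = r" by linarith
  define C where "C = atom ` R"
  have injR: "inj_on atom R"
  proof (rule inj_onI)
    fix x y assume x: "x \<in> R" and y: "y \<in> R" and e: "atom x = atom y"
    have "Min (atom x) = x" "Min (atom y) = y" using x y unfolding R_def by auto
    thus "x = y" using e by metis
  qed
  have cC: "card C = r" using card_image[OF injR] cR C_def by simp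
  have fC: "finite C" unfolding C_def using finite_subset[OF Rsub] by blast
  obtain h where h: "bij_betw h {0..<r} C" using ex_bij_betw_nat_finite[OF fC] cC by auto
  define I where "I k = h (k - 1)" for k
  have IC: "I k \<in> C" if "k \<in> {1..r}" for k using h that unfolding I_def bij_betw_def by auto
  have Cprop: "\<exists>i\<in>{1..s}. A = atom i" if "A \<in> C" for A using that Rsub unfolding C_def by blast
  show ?thesis
  proof (intro exI[of _ I] conjI ballI impI)
    fix k assume k: "k \<in> {1..r}"
    then obtain i where i: "i \<in> {1..s}" "I k = atom i" using Cprop IC by blast
    show "I k \<noteq> {}" using i atom_mem by auto
    show "(\<Sum>i\<in>I k. p i) = 0" unfolding i(2) by (rule cl_imp_zero[OF atom_cl[OF i(1)]])
  next
    fix k l assume k: "k \<in> {1..r}" and l: "l \<in> {1..r}" and ne: "k \<noteq> l"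
    have "I k \<noteq> I l"
    proof
      assume "I k = I l"
      hence "h (k-1) = h (l-1)" by (simp add: I_def)
      moreover have "k - 1 \<in> {0..<r}" "l - 1 \<in> {0..<r}" using k l by auto
      ultimately have "k - 1 = l - 1" using h unfolding bij_betw_def inj_on_def by blast
      thus False using k l ne by auto
    qed
    moreover obtain i where i: "i \<in> {1..s}" "I k = atom i" using Cprop IC k by blast
    moreover obtain j where j: "j \<in> {1..s}" "I l = atom j" using Cprop IC l by blast
    ultimately show "I k \<inter> I l = {}"
    proof (intro equals0I)
      fix x assume ne: "I k \<noteq> I l" and ik: "I k = atom i" and jl: "I l = atom j"
        and x: "x \<in> I k \<inter> I l"
      have "atom x = atom i" using atom_eq[OF i(1)] x ik by auto
      moreover have "atom x = atom j" using atom_eq[OF j(1)] x jl by auto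
      ultimately show False using ne ik jl by simp
    qed
  next
    show "(\<Union>k\<in>{1..r}. I k) = {1..s}"
    proof
      show "(\<Union>k\<in>{1..r}. I k) \<subseteq> {1..s}"
      proof
        fix x assume "x \<in> (\<Union>k\<in>{1..r}. I k)"
        then obtain k where k: "k \<in> {1..r}" and x: "x \<in> I k" by auto
        obtain i where i: "i \<in> {1..s}" "I k = atom i" using Cprop IC k by blast
        show "x \<in> {1..s}" using atom_sub1[OF i(1)] x i(2) by auto
      qed
      show "{1..s} \<subseteq> (\<Union>k\<in>{1..r}. I k)"
      proof
        fix i assume i: "i \<in> {1..s}"
        have "atom i = atom (Min (atom i))" using atom_eq[OF i minatom(1)[OF i]] by simp
        hence "atom i \<in> C" using minatom(2)[OF i] C_def by auto
        then obtain k0 where k0: "k0 \<in> {0..<r}" "h k0 = atom i"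
          using h unfolding bij_betw_def by auto
        have "I (Suc k0) = atom i" using k0 by (simp add: I_def)
        moreover have "Suc k0 \<in> {1..r}" using k0 by auto
        ultimately show "i \<in> (\<Union>k\<in>{1..r}. I k)" using atom_mem[OF i] by blast
      qed
    qed
  qed
qed

end

theorem lemma4p1:
  fixes \<Delta> :: "(real ^ 'n) set"
    and D N :: "nat \<Rightarrow> (real ^ 'n) set"
    and p :: "nat \<Rightarrow> real ^ 'n"
    and s r :: nat
  assumes "reflexive_polytope \<Delta>"
    and "aff_dim \<Delta> = int CARD('n)"
    and "nef_partition \<Delta> s D"
    and "dual_nef_partition s D N"
    and "\<forall>i\<in>{1..s}. p i \<in> N i"
    and "(\<Sum>i\<in>{1..s}. p i) = 0"
    and "int (dim (span (p ` {1..s}))) = int s - int r"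
  shows "\<exists>I :: nat \<Rightarrow> nat set.
           (\<forall>k\<in>{1..r}. I k \<noteq> {}) \<and>
           (\<forall>k\<in>{1..r}. \<forall>l\<in>{1..r}. k \<noteq> l \<longrightarrow> I k \<inter> I l = {}) \<and>
           (\<Union>k\<in>{1..r}. I k) = {1..s} \<and>
           (\<forall>k\<in>{1..r}. (\<Sum>i\<in>I k. p i) = 0)"
proof -
  interpret nefctx s D p \<Delta>
  proof
    fix i j y assume i: "i \<in> {1..s}" and j: "j \<in> {1..s}" and ne: "i \<noteq> j" and y: "y \<in> D j"
    have "p i \<in> N i" using assms(5) i by auto
    hence "\<forall>j\<in>{1..s}. \<forall>x\<in>D j. x \<bullet> p i \<ge> - (if i = j then 1 else 0)"
      using assms(4) i unfolding dual_nef_partition_def by auto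
    thus "y \<bullet> p i \<ge> 0" using j y ne by fastforce
  next
    show "(\<Sum>i\<in>{1..s}. p i) = 0" by (rule assms(6))
    show "0 \<in> interior \<Delta>" using assms(1) unfolding reflexive_polytope_def by auto
    show "\<Delta> = minkowski_sum_family s D" using assms(3) unfolding nef_partition_def by auto
  qed
  show ?thesis by (rule partition_ex[OF assms(7)])
qed

end
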